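(* Let $w\in S_n$. If $|B(w)|=1$ or $|C(w)|=1$, then $$|B(w)|+|C(w)|-1 = |R(w)| = |B(w)|\cdot|C(w)|.$$
   Context: $S_n$ is generated by the adjacent transpositions $s_1,\dots,s_{n-1}$. A reduced word for $w$ is a word $i_1\cdots i_k$ with $w=s_{i_1}\cdots s_{i_k}$ and $k$ minimal; $R(w)$ is the set of reduced words. A braid move replaces a factor (consecutive letters) $i(i+1)i$ by $(i+1)i(i+1)$ or vice versa; a commutation move replaces a factor $ij$ with $|i-j|>1$ by $ji$. $B(w)$ (resp. $C(w)$) is the set of equivalence classes of $R(w)$ under sequences of braid moves (resp. commutation moves). *)

theory Defs
  imports Main "HOL-Combinatorics.Transposition" "HOL-Combinatorics.Permutations"
begin

definition s :: "nat \<Rightarrow> nat \<Rightarrow> nat" where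
  "s i = transpose i (Suc i)"

definition word_prod :: "nat list \<Rightarrow> (nat \<Rightarrow> nat)" where
  "word_prod ws = foldr (\<lambda>i f. s i \<circ> f) ws id"

definition words :: "nat \<Rightarrow> nat list set" where
  "words n = {ws. set ws \<subseteq> {1..<n}}"

definition reduced_words :: "nat \<Rightarrow> (nat \<Rightarrow> nat) \<Rightarrow> nat list set" where
  "reduced_words n w =
     {ws \<in> words n. word_prod ws = w \<and>
        (\<forall>vs \<in> words n. word_prod vs = w \<longrightarrow> length ws \<le> length vs)}"

definition braid_move :: "nat list \<Rightarrow> nat list \<Rightarrow> bool" where
  "braid_move u v \<longleftrightarrow> (\<exists>xs ys i.
      (u = xs @ [i, Suc i, i] @ ys \<and> v = xs @ [Suc i, i, Suc i] @ ys) \<or>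
      (u = xs @ [Suc i, i, Suc i] @ ys \<and> v = xs @ [i, Suc i, i] @ ys))"

definition comm_move :: "nat list \<Rightarrow> nat list \<Rightarrow> bool" where
  "comm_move u v \<longleftrightarrow> (\<exists>xs ys i j.
      (i + 1 < j \<or> j + 1 < i) \<and> u = xs @ [i, j] @ ys \<and> v = xs @ [j, i] @ ys)"

definition braid_equiv :: "nat list rel" where
  "braid_equiv = {(u, v). braid_move u v}\<^sup>*"

definition comm_equiv :: "nat list rel" where
  "comm_equiv = {(u, v). comm_move u v}\<^sup>*"

definition braid_classes :: "nat \<Rightarrow> (nat \<Rightarrow> nat) \<Rightarrow> nat list set set" where
  "braid_classes n w = reduced_words n w // (braid_equiv \<inter> (reduced_words n w \<times> reduced_words n w))"

definition comm_classes :: "nat \<Rightarrow> (nat \<Rightarrow> nat) \<Rightarrow> nat list set set" where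
  "comm_classes n w = reduced_words n w // (comm_equiv \<inter> (reduced_words n w \<times> reduced_words n w))"

end

theory Submission
  imports Defs
begin

lemma wp_append: "word_prod (xs @ ys) = word_prod xs \<circ> word_prod ys"
  by (induction xs) (auto simp: word_prod_def)

lemma s_comm: "i + 1 < j \<or> j + 1 < i \<Longrightarrow> s i \<circ> s j = s j \<circ> s i"
  by (rule ext) (auto simp: s_def transpose_def)

lemma s_braid: "s i \<circ> s (Suc i) \<circ> s i = s (Suc i) \<circ> s i \<circ> s (Suc i)"
  by (rule ext) (auto simp: s_def transpose_def)

lemma wp2: "word_prod [i, j] = s i \<circ> s j" by (simp add: word_prod_def)
lemma wp3: "word_prod [i, j, k] = s i \<circ> s j \<circ> s k" by (simp add: word_prod_def comp_assoc)

lemma comm_move_prod: "comm_move u v \<Longrightarrow> word_prod u = word_prod v \<and> length u = length v \<and> set u = set v"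
proof -
  assume "comm_move u v"
  then obtain xs ys i j where ij: "i + 1 < j \<or> j + 1 < i"
    and u: "u = xs @ [i, j] @ ys" and v: "v = xs @ [j, i] @ ys"
    unfolding comm_move_def by blast
  have "word_prod u = word_prod xs \<circ> (s i \<circ> s j) \<circ> word_prod ys"
    unfolding u wp_append wp2 by (simp add: comp_assoc)
  also have "\<dots> = word_prod v"
    unfolding v wp_append wp2 s_comm[OF ij] by (simp add: comp_assoc)
  finally show ?thesis using u v by auto
qed

lemma braid_move_prod: "braid_move u v \<Longrightarrow> word_prod u = word_prod v \<and> length u = length v \<and> set u = set v"
proof -
  assume "braid_move u v"
  then obtain xs ys i where
    "(u = xs @ [i, Suc i, i] @ ys \<and> v = xs @ [Suc i, i, Suc i] @ ys) \<or>
      (u = xs @ [Suc i, i, Suc i] @ ys \<and> v = xs @ [i, Suc i, i] @ ys)"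
    unfolding braid_move_def by blast
  then show ?thesis
  proof
    assume h: "u = xs @ [i, Suc i, i] @ ys \<and> v = xs @ [Suc i, i, Suc i] @ ys"
    have "word_prod u = word_prod v" unfolding h[THEN conjunct1] h[THEN conjunct2] wp_append wp3 s_braid ..
    then show ?thesis using h by auto
  next
    assume h: "u = xs @ [Suc i, i, Suc i] @ ys \<and> v = xs @ [i, Suc i, i] @ ys"
    have "word_prod u = word_prod v" unfolding h[THEN conjunct1] h[THEN conjunct2] wp_append wp3 s_braid ..
    then show ?thesis using h by auto
  qed
qed

lemma move_R:
  assumes "u \<in> reduced_words n w"
    and "word_prod u = word_prod v \<and> length u = length v \<and> set u = set v"
  shows "v \<in> reduced_words n w"
  using assms unfolding reduced_words_def words_def by auto

definition h :: "nat \<Rightarrow> int" where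
  "h k = (if k mod 6 = 0 then 1 else if k mod 6 = 1 then 1 else if k mod 6 = 2 then 0
          else if k mod 6 = 3 then -1 else if k mod 6 = 4 then -1 else 0)"

fun phi :: "nat \<Rightarrow> nat list \<Rightarrow> int" where
  "phi m [] = 0"
| "phi m (x # xs) = h m * int x + phi (Suc m) xs"

lemma phi_append: "phi m (xs @ ys) = phi m xs + phi (m + length xs) ys"
  by (induction xs arbitrary: m) auto

lemma h6: "h (m + 6) = h m"
  by (simp only: h_def mod_add_self2)

lemma h_per:
  fixes m :: nat
  assumes "\<And>m. m < 6 \<Longrightarrow> P m" "\<And>m. P m \<Longrightarrow> P (m + 6)"
  shows "P m"
proof (induction m rule: nat_less_induct)
  case (1 m)
  show ?case
  proof (cases "m < 6")
    case True then show ?thesis using assms(1) by blast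
  next
    case False
    then have "m = (m - 6) + 6" by simp
    moreover have "P (m - 6)" using 1 False by simp
    ultimately show ?thesis using assms(2) by metis
  qed
qed

lemma h_braid: "h m - h (Suc m) + h (Suc (Suc m)) = 0"
proof (rule h_per[of _ m])
  fix m :: nat assume "m < 6"
  then have "m = 0 \<or> m = 1 \<or> m = 2 \<or> m = 3 \<or> m = 4 \<or> m = 5" by linarith
  then show "h m - h (Suc m) + h (Suc (Suc m)) = 0" by (elim disjE) (simp_all add: h_def)
next
  fix m :: nat
  assume "h m - h (Suc m) + h (Suc (Suc m)) = 0"
  then show "h (m + 6) - h (Suc (m + 6)) + h (Suc (Suc (m + 6))) = 0"
    using h6[of m] h6[of "Suc m"] h6[of "Suc (Suc m)"] by simp
qed

lemma h_comm: "h m \<noteq> h (Suc m) \<or> h (Suc m) \<noteq> h (Suc (Suc m))"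
proof (rule h_per[of _ m])
  fix m :: nat assume "m < 6"
  then have "m = 0 \<or> m = 1 \<or> m = 2 \<or> m = 3 \<or> m = 4 \<or> m = 5" by linarith
  then show "h m \<noteq> h (Suc m) \<or> h (Suc m) \<noteq> h (Suc (Suc m))" by (elim disjE) (simp_all add: h_def)
next
  fix m :: nat
  assume "h m \<noteq> h (Suc m) \<or> h (Suc m) \<noteq> h (Suc (Suc m))"
  then show "h (m + 6) \<noteq> h (Suc (m + 6)) \<or> h (Suc (m + 6)) \<noteq> h (Suc (Suc (m + 6)))"
    using h6[of m] h6[of "Suc m"] h6[of "Suc (Suc m)"] by simp
qed

lemma phi_braid3: "phi m [i, Suc i, i] = phi m [Suc i, i, Suc i]"
proof -
  have "phi m [i, Suc i, i] - phi m [Suc i, i, Suc i] = - (h m - h (Suc m) + h (Suc (Suc m)))"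
    by (simp add: algebra_simps)
  then show ?thesis using h_braid[of m] by simp
qed

lemma phi_braid_move: "braid_move u v \<Longrightarrow> phi m u = phi m v"
proof -
  assume "braid_move u v"
  then obtain xs ys i where
    "(u = xs @ [i, Suc i, i] @ ys \<and> v = xs @ [Suc i, i, Suc i] @ ys) \<or>
      (u = xs @ [Suc i, i, Suc i] @ ys \<and> v = xs @ [i, Suc i, i] @ ys)"
    unfolding braid_move_def by blast
  then show ?thesis
    using phi_braid3[of "m + length xs" i] phi_braid3[of "m + length xs + 3" i]
    by (auto simp only: phi_append list.size add.assoc)
qed

lemma phi_braid_equiv: "(u, v) \<in> braid_equiv \<Longrightarrow> phi m u = phi m v"
  unfolding braid_equiv_def
  by (induction rule: rtrancl_induct) (auto dest: phi_braid_move)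

lemma comm_not_braid:
  assumes "comm_move u v" shows "(u, v) \<notin> braid_equiv"
proof
  assume b: "(u, v) \<in> braid_equiv"
  from assms obtain xs ys i j where ij: "i + 1 < j \<or> j + 1 < i"
    and u: "u = xs @ [i, j] @ ys" and v: "v = xs @ [j, i] @ ys"
    unfolding comm_move_def by blast
  let ?m = "length xs"
  have d: "\<And>c. phi c u - phi c v = (h (c + ?m) - h (Suc (c + ?m))) * (int i - int j)"
    by (simp add: u v phi_append algebra_simps)
  have z: "\<And>c. (h (c + ?m) - h (Suc (c + ?m))) * (int i - int j) = 0"
    using d phi_braid_equiv[OF b] by (metis diff_self)
  have ne: "int i - int j \<noteq> 0" using ij by auto
  have "h ?m = h (Suc ?m)" using z[of 0] ne by simp
  moreover have "h (Suc ?m) = h (Suc (Suc ?m))" using z[of 1] ne by simp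
  ultimately show False using h_comm[of ?m] by simp
qed

lemma braid_mset: "braid_move u v \<Longrightarrow> mset u \<noteq> mset v"
  unfolding braid_move_def
  by (auto simp: add_mset_commute)

lemma comm_mset: "(u, v) \<in> comm_equiv \<Longrightarrow> mset u = mset v"
  unfolding comm_equiv_def
  by (induction rule: rtrancl_induct) (auto simp: comm_move_def add_mset_commute)

lemma single_class:
  assumes "card (R // (E \<inter> R \<times> R)) = 1" "x \<in> R" "y \<in> R" "\<And>z. (z, z) \<in> E"
  shows "(x, y) \<in> E"
proof -
  let ?E = "E \<inter> R \<times> R"
  obtain A where A: "R // ?E = {A}" using assms(1) by (rule card_1_singletonE)
  have "?E `` {x} \<in> R // ?E" using assms(2) by (rule quotientI)
  then have ax: "?E `` {x} = A" using A by simp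
  have "?E `` {y} \<in> R // ?E" using assms(3) by (rule quotientI)
  then have ay: "?E `` {y} = A" using A by simp
  have "y \<in> ?E `` {y}" using assms(3,4) by simp
  then have "y \<in> ?E `` {x}" using ax ay by simp
  then show ?thesis by simp
qed

lemma singleton_classes:
  assumes "\<And>x y. x \<in> R \<Longrightarrow> y \<in> R \<Longrightarrow> (x, y) \<in> E \<Longrightarrow> x = y" "\<And>z. (z, z) \<in> E"
  shows "card (R // (E \<inter> R \<times> R)) = card R"
proof -
  have "\<And>x. x \<in> R \<Longrightarrow> (E \<inter> R \<times> R) `` {x} = {x}" using assms by auto
  then have "R // (E \<inter> R \<times> R) = (\<lambda>x. {x}) ` R"
    unfolding quotient_def by auto
  then show ?thesis by (simp add: card_image)
qed

lemma rt_first: "(x, y) \<in> {(u, v). P u v}\<^sup>* \<Longrightarrow> x \<noteq> y \<Longrightarrow> \<exists>z. P x z"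
  by (erule converse_rtranclE) auto

theorem corollary4p9:
  fixes n :: nat and w :: "nat \<Rightarrow> nat"
  assumes "w permutes {1..n}"
    and "card (braid_classes n w) = 1 \<or> card (comm_classes n w) = 1"
  shows "card (braid_classes n w) + card (comm_classes n w) - 1 = card (reduced_words n w)
       \<and> card (reduced_words n w) = card (braid_classes n w) * card (comm_classes n w)"
  using assms(2)
proof
  let ?R = "reduced_words n w"
  assume B: "card (braid_classes n w) = 1"
  have "card (comm_classes n w) = card ?R"
    unfolding comm_classes_def
  proof (rule singleton_classes)
    show "(z, z) \<in> comm_equiv" for z by (simp add: comm_equiv_def)
    fix x y assume x: "x \<in> ?R" and y: "y \<in> ?R" and xy: "(x, y) \<in> comm_equiv"
    show "x = y"
    proof (rule ccontr)
      assume "x \<noteq> y"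
      then obtain z where z: "comm_move x z" using rt_first[OF xy[unfolded comm_equiv_def]] by blast
      have "z \<in> ?R" using move_R[OF x comm_move_prod[OF z]] .
      moreover have "card (?R // (braid_equiv \<inter> ?R \<times> ?R)) = 1" using B unfolding braid_classes_def .
      moreover have "\<And>z. (z, z) \<in> braid_equiv" unfolding braid_equiv_def by simp
      ultimately have "(x, z) \<in> braid_equiv" using single_class x by metis
      then show False using comm_not_braid[OF z] by simp
    qed
  qed
  then show ?thesis using B by simp
next
  let ?R = "reduced_words n w"
  assume C: "card (comm_classes n w) = 1"
  have "card (braid_classes n w) = card ?R"
    unfolding braid_classes_def
  proof (rule singleton_classes)
    show "(z, z) \<in> braid_equiv" for z by (simp add: braid_equiv_def)
    fix x y assume x: "x \<in> ?R" and y: "y \<in> ?R" and xy: "(x, y) \<in> braid_equiv"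
    show "x = y"
    proof (rule ccontr)
      assume "x \<noteq> y"
      then obtain z where z: "braid_move x z" using rt_first[OF xy[unfolded braid_equiv_def]] by blast
      have "z \<in> ?R" using move_R[OF x braid_move_prod[OF z]] .
      moreover have "card (?R // (comm_equiv \<inter> ?R \<times> ?R)) = 1" using C unfolding comm_classes_def .
      moreover have "\<And>z. (z, z) \<in> comm_equiv" unfolding comm_equiv_def by simp
      ultimately have "(x, z) \<in> comm_equiv" using single_class x by metis
      then show False using comm_mset braid_mset[OF z] by blast
    qed
  qed
  then show ?thesis using C by simp
qed

end
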